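(* Let $n,m\ge1$, $c_1,\dots,c_n>0$, $T>0$, $\epsilon>0$, $\kappa_{ij}\ge0$, $\bar r_1,\dots,\bar r_m>0$ and $R=\prod_{i=1}^m[0,\bar r_i]$. For $r\in R$ let $$C(X,q,r)=\sum_{i,j}\kappa_{ij}x_{ij}+\sum_j\beta_j(q_j)+\epsilon\sum_{i,j}x_{ij}\log\Big(\frac{x_{ij}}{r_i}\Big),$$ where $\beta_j(q_j)=0$ for $q_j\le c_j$ and $\beta_j(q_j)=q_j-c_j-c_j\log(q_j/c_j)$ for $q_j>c_j$, and let $\mathcal{C}(r)$ be the minimum of $C(X,q,r)$ over $(X,q)\in\mathbb{R}^{m\times n}\times\mathbb{R}^n$ satisfying $x_{ij}\ge0$, $\sum_jx_{ij}=r_i$ for all $i$, and $\sum_ix_{ij}=q_j/T$ for all $j$. Then $\mathcal{C}$ is convex on $R$.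
   Context: Conventions: $0\log0=0$ and terms with $x_{ij}=0$ (in particular all terms with $r_i=0$, which force $x_{ij}=0$) contribute zero to the entropy term; equivalently the entropy term is $\epsilon\sum_i r_i\sum_j\delta_{ij}\log\delta_{ij}$ with $\delta_{ij}=x_{ij}/r_i$. *)

theory Defs
  imports "HOL-Analysis.Analysis"
begin

definition beta :: "real \<Rightarrow> real \<Rightarrow> real" where
  "beta c q = (if q \<le> c then 0 else q - c - c * ln (q / c))"

definition xlog :: "real \<Rightarrow> real \<Rightarrow> real" where
  "xlog x r = (if x = 0 then 0 else x * ln (x / r))"

definition cost :: "real \<Rightarrow> real^'n^'m \<Rightarrow> real^'n \<Rightarrow> real^'n^'m \<Rightarrow> real^'n \<Rightarrow> real^'m \<Rightarrow> real" where
  "cost eps kappa c X q r =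
     (\<Sum>i\<in>UNIV. \<Sum>j\<in>UNIV. kappa$i$j * X$i$j)
     + (\<Sum>j\<in>UNIV. beta (c$j) (q$j))
     + eps * (\<Sum>i\<in>UNIV. \<Sum>j\<in>UNIV. xlog (X$i$j) (r$i))"

definition feasible :: "real \<Rightarrow> real^'n^'m \<Rightarrow> real^'n \<Rightarrow> real^'m \<Rightarrow> bool" where
  "feasible T X q r \<longleftrightarrow>
     (\<forall>i j. 0 \<le> X$i$j) \<and> (\<forall>i. (\<Sum>j\<in>UNIV. X$i$j) = r$i) \<and> (\<forall>j. (\<Sum>i\<in>UNIV. X$i$j) = q$j / T)"

text \<open>Optimal cost \<C>(r): the minimum (= infimum, since it is attained) of C over the feasible set.\<close>
definition opt_cost :: "real \<Rightarrow> real \<Rightarrow> real^'n^'m \<Rightarrow> real^'n \<Rightarrow> real^'m \<Rightarrow> real" where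
  "opt_cost T eps kappa c r = Inf {cost eps kappa c X q r | X q. feasible T X q r}"

end

theory Submission imports Defs begin

lemma xlog_lb: assumes "0 \<le> x" "0 \<le> r" shows "xlog x r \<ge> - r"
proof (cases "x = 0 \<or> r = 0")
  case True then show ?thesis using assms by (auto simp: xlog_def)
next
  case False
  then have xp: "x > 0" and rp: "r > 0" using assms by auto
  have "ln (r/x) \<le> r/x - 1" using ln_le_minus_one xp rp by simp
  then have "x * ln (r/x) \<le> x*(r/x - 1)" using xp by (simp add: mult_left_mono)
  also have "\<dots> = r - x" using xp by (simp add: field_simps)
  finally have "x * ln (r/x) \<le> r - x" .
  moreover have "ln (x/r) = - ln (r/x)" using xp rp by (simp add: ln_div)
  ultimately show ?thesis using False xp by (simp add: xlog_def)
qed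

lemma beta_nonneg: assumes "c > 0" shows "beta c q \<ge> 0"
proof (cases "q \<le> c")
  case False
  then have "ln (q/c) \<le> q/c - 1" using assms by (intro ln_le_minus_one) simp
  then have "c * ln (q/c) \<le> c*(q/c - 1)" using assms by (simp add: mult_left_mono)
  also have "\<dots> = q - c" using assms by (simp add: field_simps)
  finally show ?thesis using False by (simp add: beta_def)
qed (simp add: beta_def)

lemma xlog_scale: assumes "t \<ge> 0" shows "xlog (t*x) (t*r) = t * xlog x r"
  using assms by (cases "t = 0") (auto simp: xlog_def)

lemma logsum: fixes a b c d :: real assumes "a > 0" "b > 0" "c > 0" "d > 0"
  shows "(a+b) * ln ((a+b)/(c+d)) \<le> a * ln (a/c) + b * ln (b/d)"
proof -
  have "0 < c*(a+b)/(a*(c+d))" using assms by (auto intro!: divide_pos_pos mult_pos_pos add_pos_pos)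
  then have "ln (c*(a+b)/(a*(c+d))) \<le> c*(a+b)/(a*(c+d)) - 1"
    by (rule ln_le_minus_one)
  then have 1: "a * ln (c*(a+b)/(a*(c+d))) \<le> a*(c*(a+b)/(a*(c+d)) - 1)"
    using assms by (intro mult_left_mono) auto
  have "0 < d*(a+b)/(b*(c+d))" using assms by (auto intro!: divide_pos_pos mult_pos_pos add_pos_pos)
  then have "ln (d*(a+b)/(b*(c+d))) \<le> d*(a+b)/(b*(c+d)) - 1"
    by (rule ln_le_minus_one)
  then have 2: "b * ln (d*(a+b)/(b*(c+d))) \<le> b*(d*(a+b)/(b*(c+d)) - 1)"
    using assms by (intro mult_left_mono) auto
  have s: "a*(c*(a+b)/(a*(c+d)) - 1) + b*(d*(a+b)/(b*(c+d)) - 1) = 0"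
  proof -
    have "a*(c*(a+b)/(a*(c+d))) = c*(a+b)/(c+d)" "b*(d*(a+b)/(b*(c+d))) = d*(a+b)/(c+d)"
      using assms by auto
    moreover have "c*(a+b)/(c+d) + d*(a+b)/(c+d) = a + b"
      using assms by (simp add: add_divide_distrib[symmetric] distrib_right[symmetric])
    ultimately show ?thesis by (simp add: algebra_simps)
  qed
  have e1: "ln (c*(a+b)/(a*(c+d))) = ln c + ln (a+b) - ln a - ln (c+d)"
    using assms by (simp add: ln_div ln_mult)
  have e2: "ln (d*(a+b)/(b*(c+d))) = ln d + ln (a+b) - ln b - ln (c+d)"
    using assms by (simp add: ln_div ln_mult)
  have e3: "ln ((a+b)/(c+d)) = ln (a+b) - ln (c+d)" "ln (a/c) = ln a - ln c" "ln (b/d) = ln b - ln d"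
    using assms by (simp_all add: ln_div)
  show ?thesis using 1 2 s unfolding e1 e2 e3 by (simp add: algebra_simps)
qed

lemma xlog_sub: assumes "a \<ge> 0" "b \<ge> 0" "c \<ge> 0" "d \<ge> 0" "a > 0 \<Longrightarrow> c > 0" "b > 0 \<Longrightarrow> d > 0"
  shows "xlog (a+b) (c+d) \<le> xlog a c + xlog b d"
proof -
  consider "a = 0" "b = 0" | "a = 0" "b > 0" | "a > 0" "b = 0" | "a > 0" "b > 0" using assms by linarith
  then show ?thesis
  proof cases
    case 1 then show ?thesis by (simp add: xlog_def)
  next
    case 2
    then have "ln (b/(c+d)) \<le> ln (b/d)" using assms by (intro ln_mono frac_le) auto
    then show ?thesis using 2 by (simp add: xlog_def mult_left_mono)
  next
    case 3
    then have "ln (a/(c+d)) \<le> ln (a/c)" using assms by (intro ln_mono frac_le) auto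
    then show ?thesis using 3 by (simp add: xlog_def mult_left_mono)
  next
    case 4 then show ?thesis using logsum[of a b c d] assms by (simp add: xlog_def)
  qed
qed

definition gfun :: "real \<Rightarrow> real \<Rightarrow> real" where "gfun c q = q - c - c * ln (q / c)"

lemma gfun_convex: assumes "c > 0" shows "convex_on {c..} (gfun c)"
proof (rule convex_on_realI[where f' = "\<lambda>q. 1 - c/q"])
  show "connected {c..}" by simp
  fix x assume x: "x \<in> {c..}"
  then have xp: "x > 0" using assms by auto
  have "((\<lambda>q. q - c - c * ln (q / c)) has_real_derivative (1 - 0 - c * ((1/c) / (x/c)))) (at x)"
    using xp assms by (auto intro!: derivative_eq_intros)
  then show "(gfun c has_real_derivative 1 - c/x) (at x)"
    using xp assms unfolding gfun_def[abs_def] by (simp add: field_simps)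
next
  fix x y assume "x \<in> {c..}" "y \<in> {c..}" "x \<le> y"
  then show "1 - c/x \<le> 1 - c/y" using assms by (simp add: frac_le)
qed

lemma gfun_mono: assumes "c > 0" "c \<le> x" "x \<le> y" shows "gfun c x \<le> gfun c y"
proof -
  have xp: "x > 0" using assms by auto
  have "ln (y/x) \<le> y/x - 1" using assms xp by (intro ln_le_minus_one) simp
  then have "c * ln (y/x) \<le> c*(y/x - 1)" using assms by (simp add: mult_left_mono)
  also have "\<dots> \<le> y - x"
  proof -
    have "c*(y/x - 1) = (c/x)*(y-x)" using xp by (simp add: field_simps)
    also have "\<dots> \<le> 1*(y-x)" using assms xp by (intro mult_right_mono) auto
    finally show ?thesis by simp
  qed
  finally have "c * ln (y/x) \<le> y - x" .
  moreover have "ln (y/c) = ln (y/x) + ln (x/c)" using assms xp by (simp add: ln_div)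
  ultimately show ?thesis by (simp add: gfun_def algebra_simps)
qed

lemma beta_eq: assumes "c > 0" shows "beta c q = gfun c (max q c)"
  using assms by (auto simp: beta_def gfun_def max_def)

lemma beta_convex: assumes "c > 0" "0 \<le> t" "t \<le> 1"
  shows "beta c ((1-t)*x + t*y) \<le> (1-t) * beta c x + t * beta c y"
proof -
  have "max ((1-t)*x + t*y) c \<le> (1-t)*max x c + t*max y c"
  proof -
    have "(1-t)*x \<le> (1-t)*max x c" "t*y \<le> t*max y c" "(1-t)*c \<le> (1-t)*max x c" "t*c \<le> t*max y c"
      using assms by (auto intro!: mult_left_mono)
    moreover have "(1-t)*c + t*c = c" by (simp add: algebra_simps)
    ultimately have "(1-t)*x + t*y \<le> (1-t)*max x c + t*max y c" "c \<le> (1-t)*max x c + t*max y c"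
      by linarith+
    then show ?thesis by simp
  qed
  moreover have "c \<le> max ((1-t)*x + t*y) c" by simp
  ultimately have "gfun c (max ((1-t)*x + t*y) c) \<le> gfun c ((1-t)*max x c + t*max y c)"
    using gfun_mono assms(1) by blast
  also have "\<dots> \<le> (1-t) * gfun c (max x c) + t * gfun c (max y c)"
    using convex_onD[OF gfun_convex[OF assms(1)], of t "max x c" "max y c"] assms by simp
  finally show ?thesis using assms(1) by (simp add: beta_eq)
qed


lemma feasible_le: assumes "feasible T X q r" shows "X$i$j \<le> r$i"
proof -
  have "X$i$j \<le> (\<Sum>j\<in>UNIV. X$i$j)"
    using assms by (intro member_le_sum) (auto simp: feasible_def)
  then show ?thesis using assms by (simp add: feasible_def)
qed

lemma cost_lb:
  fixes kappa :: "real^'n^'m"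
  assumes "\<forall>j. c$j > 0" "eps > 0" "\<forall>i j. kappa$i$j \<ge> 0" "feasible T X q r" "\<forall>i. 0 \<le> r$i"
  shows "cost eps kappa c X q r \<ge> - eps * (\<Sum>i\<in>UNIV. \<Sum>j\<in>(UNIV::'n set). r$i)"
proof -
  have a: "(\<Sum>i\<in>UNIV. \<Sum>j\<in>UNIV. kappa$i$j * X$i$j) \<ge> 0"
    using assms by (intro sum_nonneg) (auto simp: feasible_def)
  have b: "(\<Sum>j\<in>UNIV. beta (c$j) (q$j)) \<ge> 0"
    using assms by (intro sum_nonneg beta_nonneg) auto
  have "(\<Sum>i\<in>UNIV. \<Sum>j\<in>UNIV. xlog (X$i$j) (r$i)) \<ge> (\<Sum>i\<in>UNIV. \<Sum>j\<in>(UNIV::'n set). - r$i)"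
    using assms by (intro sum_mono xlog_lb) (auto simp: feasible_def)
  then have "eps * (\<Sum>i\<in>UNIV. \<Sum>j\<in>UNIV. xlog (X$i$j) (r$i)) \<ge> eps * (\<Sum>i\<in>UNIV. \<Sum>j\<in>(UNIV::'n set). - r$i)"
    using assms by (intro mult_left_mono) auto
  then show ?thesis using a b unfolding cost_def by (simp add: sum_negf)
qed

lemma feasible_ex:
  assumes "T > 0" "\<forall>i. 0 \<le> r$i"
  shows "\<exists>X q. feasible T (X::real^'n^'m) q r"
proof -
  define X :: "real^'n^'m" where "X = (\<chi> i j. r$i / real CARD('n))"
  define q :: "real^'n" where "q = (\<chi> j. T * (\<Sum>i\<in>UNIV. X$i$j))"
  have "feasible T X q r"
    using assms unfolding feasible_def X_def q_def by auto
  then show ?thesis by blast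
qed

lemma cost_convex:
  fixes kappa :: "real^'n^'m"
  assumes "\<forall>j. c$j > 0" "eps > 0" "0 \<le> t" "t \<le> 1"
    and fX: "feasible T X q r" and fY: "feasible T Y p s"
    and "\<forall>i. 0 \<le> r$i" "\<forall>i. 0 \<le> s$i"
  shows "cost eps kappa c ((1-t) *\<^sub>R X + t *\<^sub>R Y) ((1-t) *\<^sub>R q + t *\<^sub>R p) ((1-t) *\<^sub>R r + t *\<^sub>R s)
    \<le> (1-t) * cost eps kappa c X q r + t * cost eps kappa c Y p s"
proof -
  have a: "(\<Sum>i\<in>UNIV. \<Sum>j\<in>UNIV. kappa$i$j * ((1-t) *\<^sub>R X + t *\<^sub>R Y)$i$j)
     = (1-t) * (\<Sum>i\<in>UNIV. \<Sum>j\<in>UNIV. kappa$i$j * X$i$j) + t * (\<Sum>i\<in>UNIV. \<Sum>j\<in>UNIV. kappa$i$j * Y$i$j)"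
  proof -
    have "(\<Sum>i\<in>UNIV. \<Sum>j\<in>UNIV. kappa$i$j * ((1-t) *\<^sub>R X + t *\<^sub>R Y)$i$j)
      = (\<Sum>i\<in>UNIV. \<Sum>j\<in>UNIV. (1-t) * (kappa$i$j * X$i$j) + t * (kappa$i$j * Y$i$j))"
      by (simp add: algebra_simps)
    then show ?thesis by (simp only: sum.distrib sum_distrib_left)
  qed
  have b: "(\<Sum>j\<in>UNIV. beta (c$j) (((1-t) *\<^sub>R q + t *\<^sub>R p)$j))
     \<le> (1-t) * (\<Sum>j\<in>UNIV. beta (c$j) (q$j)) + t * (\<Sum>j\<in>UNIV. beta (c$j) (p$j))"
  proof -
    have "(\<Sum>j\<in>UNIV. beta (c$j) (((1-t) *\<^sub>R q + t *\<^sub>R p)$j))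
       \<le> (\<Sum>j\<in>UNIV. (1-t) * beta (c$j) (q$j) + t * beta (c$j) (p$j))"
      using assms by (intro sum_mono) (simp add: beta_convex)
    then show ?thesis by (simp add: sum_distrib_left sum.distrib)
  qed
  have x: "xlog (((1-t) *\<^sub>R X + t *\<^sub>R Y)$i$j) (((1-t) *\<^sub>R r + t *\<^sub>R s)$i)
     \<le> (1-t) * xlog (X$i$j) (r$i) + t * xlog (Y$i$j) (s$i)" for i j
  proof -
    have X0: "0 \<le> X$i$j" and Y0: "0 \<le> Y$i$j" using fX fY by (auto simp: feasible_def)
    have Xr: "X$i$j \<le> r$i" and Ys: "Y$i$j \<le> s$i" using feasible_le fX fY by blast+
    have "xlog ((1-t) * X$i$j + t * Y$i$j) ((1-t) * r$i + t * s$i)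
       \<le> xlog ((1-t) * X$i$j) ((1-t) * r$i) + xlog (t * Y$i$j) (t * s$i)"
      using assms X0 Y0 Xr Ys by (intro xlog_sub) (auto intro: mult_nonneg_nonneg simp: zero_less_mult_iff)
    then show ?thesis using assms by (simp add: xlog_scale)
  qed
  have c: "eps * (\<Sum>i\<in>UNIV. \<Sum>j\<in>UNIV. xlog (((1-t) *\<^sub>R X + t *\<^sub>R Y)$i$j) (((1-t) *\<^sub>R r + t *\<^sub>R s)$i))
     \<le> (1-t) * (eps * (\<Sum>i\<in>UNIV. \<Sum>j\<in>UNIV. xlog (X$i$j) (r$i))) + t * (eps * (\<Sum>i\<in>UNIV. \<Sum>j\<in>UNIV. xlog (Y$i$j) (s$i)))"
  proof -
    have "(\<Sum>i\<in>UNIV. \<Sum>j\<in>UNIV. xlog (((1-t) *\<^sub>R X + t *\<^sub>R Y)$i$j) (((1-t) *\<^sub>R r + t *\<^sub>R s)$i))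
      \<le> (\<Sum>i\<in>UNIV. \<Sum>j\<in>(UNIV::'n set). (1-t) * xlog (X$i$j) (r$i) + t * xlog (Y$i$j) (s$i))"
      by (intro sum_mono x)
    then have "eps * (\<Sum>i\<in>UNIV. \<Sum>j\<in>UNIV. xlog (((1-t) *\<^sub>R X + t *\<^sub>R Y)$i$j) (((1-t) *\<^sub>R r + t *\<^sub>R s)$i))
      \<le> eps * (\<Sum>i\<in>UNIV. \<Sum>j\<in>(UNIV::'n set). (1-t) * xlog (X$i$j) (r$i) + t * xlog (Y$i$j) (s$i))"
      using assms by (intro mult_left_mono) auto
    also have "eps * (\<Sum>i\<in>UNIV. \<Sum>j\<in>(UNIV::'n set). (1-t) * xlog (X$i$j) (r$i) + t * xlog (Y$i$j) (s$i))
      = (1-t) * (eps * (\<Sum>i\<in>UNIV. \<Sum>j\<in>UNIV. xlog (X$i$j) (r$i))) + t * (eps * (\<Sum>i\<in>UNIV. \<Sum>j\<in>UNIV. xlog (Y$i$j) (s$i)))"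
      by (simp only: sum.distrib sum_distrib_left mult.left_commute distrib_left)
    finally show ?thesis .
  qed
  show ?thesis unfolding cost_def distrib_left using a b c by linarith
qed

theorem proposition4:
  fixes c :: "real^'n" and kappa :: "real^'n^'m" and rbar :: "real^'m"
    and T eps :: real
  assumes "\<forall>j. c$j > 0" and "T > 0" and "eps > 0"
    and "\<forall>i j. kappa$i$j \<ge> 0" and "\<forall>i. rbar$i > 0"
  shows "convex_on {r :: real^'m. \<forall>i. 0 \<le> r$i \<and> r$i \<le> rbar$i} (opt_cost T eps kappa c)"
proof (rule convex_onI)
  let ?R = "{r :: real^'m. \<forall>i. 0 \<le> r$i \<and> r$i \<le> rbar$i}"
  define S where "S r = {cost eps kappa c X q r | (X::real^'n^'m) q. feasible T X q r}" for r
  have opt: "opt_cost T eps kappa c r = Inf (S r)" for r unfolding opt_cost_def S_def by simp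
  have ne: "S r \<noteq> {}" if "\<forall>i. 0 \<le> r$i" for r
    using feasible_ex[OF assms(2) that] unfolding S_def by blast
  have bdd: "bdd_below (S r)" if "\<forall>i. 0 \<le> r$i" for r
    unfolding S_def bdd_below_def
    using cost_lb[OF assms(1) assms(3) assms(4) _ that] by blast
  show "convex ?R"
    unfolding convex_def by (auto simp: mult_left_mono add_nonneg_nonneg convex_bound_le)
  fix t :: real and x y assume t: "0 < t" "t < 1" and x: "x \<in> ?R" and y: "y \<in> ?R"
  let ?z = "(1-t) *\<^sub>R x + t *\<^sub>R y"
  have x0: "\<forall>i. 0 \<le> x$i" and y0: "\<forall>i. 0 \<le> y$i" using x y by auto
  have z0: "\<forall>i. 0 \<le> ?z$i" using x0 y0 t by simp
  have key: "Inf (S ?z) \<le> (1-t) * a + t * b" if "a \<in> S x" "b \<in> S y" for a b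
  proof -
    have "\<exists>X q. feasible T X q x \<and> a = cost eps kappa c X q x" using that(1) unfolding S_def by blast
    then obtain X q where X: "feasible T X q x" "a = cost eps kappa c X q x" by blast
    have "\<exists>X q. feasible T X q y \<and> b = cost eps kappa c X q y" using that(2) unfolding S_def by blast
    then obtain Y p where Y: "feasible T Y p y" "b = cost eps kappa c Y p y" by blast
    have f: "feasible T ((1-t) *\<^sub>R X + t *\<^sub>R Y) ((1-t) *\<^sub>R q + t *\<^sub>R p) ?z"
      using X(1) Y(1) t unfolding feasible_def
      by (auto simp: sum.distrib sum_distrib_left[symmetric] add_divide_distrib)
    then have "cost eps kappa c ((1-t) *\<^sub>R X + t *\<^sub>R Y) ((1-t) *\<^sub>R q + t *\<^sub>R p) ?z \<in> S ?z"
      unfolding S_def by blast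
    then have "Inf (S ?z) \<le> cost eps kappa c ((1-t) *\<^sub>R X + t *\<^sub>R Y) ((1-t) *\<^sub>R q + t *\<^sub>R p) ?z"
      using bdd[OF z0] by (rule cInf_lower)
    also have "\<dots> \<le> (1-t) * a + t * b"
      using cost_convex[OF assms(1) assms(3) _ _ X(1) Y(1) x0 y0, of t kappa] t X(2) Y(2) by simp
    finally show ?thesis .
  qed
  have k2: "(Inf (S ?z) - t * b) / (1-t) \<le> Inf (S x)" if "b \<in> S y" for b
  proof (rule cInf_greatest[OF ne[OF x0]])
    fix a assume "a \<in> S x"
    from key[OF this that] t show "(Inf (S ?z) - t * b) / (1-t) \<le> a" by (simp add: field_simps)
  qed
  have "(Inf (S ?z) - (1-t) * Inf (S x)) / t \<le> Inf (S y)"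
  proof (rule cInf_greatest[OF ne[OF y0]])
    fix b assume "b \<in> S y"
    from k2[OF this] t show "(Inf (S ?z) - (1-t) * Inf (S x)) / t \<le> b" by (simp add: field_simps)
  qed
  then show "opt_cost T eps kappa c ?z \<le> (1-t) * opt_cost T eps kappa c x + t * opt_cost T eps kappa c y"
    using t unfolding opt by (simp add: field_simps)
qed

end
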